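(* Let $R$ be the ring of upper triangular $2\times 2$ matrices over the field $\mathbb{F}_3$ (a non-commutative ring with unity of order $27$ having exactly $15$ zero-divisors, counting $0$). Consider the (left) projective line $P(R)$. Then: (i) $P(R)$ has exactly $48$ points; (ii) exactly $42$ of these points have a representative pair $(a,b)$ in which $a$ or $b$ is a unit of $R$; (iii) every point of $P(R)$ has exactly $20$ neighbours other than itself; (iv) any two distant points of $P(R)$ have exactly $6$ common neighbours; (v) any three pairwise distant points of $P(R)$ have no common neighbour; (vi) the maximum cardinality of a set of pairwise distant points of $P(R)$ is $4$. *)

theory Defs
  imports Main "HOL-Library.Numeral_Type"
begin

definition ring_unit :: "'a::ring_1 \<Rightarrow> bool" where
  "ring_unit u \<longleftrightarrow> (\<exists>v. u * v = 1 \<and> v * u = 1)"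

definition invertible2 :: "'a::ring_1 \<Rightarrow> 'a \<Rightarrow> 'a \<Rightarrow> 'a \<Rightarrow> bool" where
  "invertible2 a b c d \<longleftrightarrow> (\<exists>e f g h.
     a*e + b*g = 1 \<and> a*f + b*h = 0 \<and> c*e + d*g = 0 \<and> c*f + d*h = 1 \<and>
     e*a + f*c = 1 \<and> e*b + f*d = 0 \<and> g*a + h*c = 0 \<and> g*b + h*d = 1)"

definition admissible :: "'a::ring_1 \<Rightarrow> 'a \<Rightarrow> bool" where
  "admissible a b \<longleftrightarrow> (\<exists>c d. invertible2 a b c d)"

definition lsub :: "'a::ring_1 \<Rightarrow> 'a \<Rightarrow> ('a \<times> 'a) set" where
  "lsub a b = {(r * a, r * b) | r. True}"

definition projline :: "('a::ring_1 \<times> 'a) set set" where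
  "projline = {lsub a b | a b. admissible a b}"

definition distant :: "('a::ring_1 \<times> 'a) set \<Rightarrow> ('a \<times> 'a) set \<Rightarrow> bool" where
  "distant p q \<longleftrightarrow> (\<exists>a b c d. p = lsub a b \<and> q = lsub c d \<and> invertible2 a b c d)"

definition neighbour :: "('a::ring_1 \<times> 'a) set \<Rightarrow> ('a \<times> 'a) set \<Rightarrow> bool" where
  "neighbour p q \<longleftrightarrow> \<not> distant p q"

text \<open>UT x y z stands for the matrix with rows (x,y) and (0,z); the type 3 is Z/3Z = F_3.\<close>
datatype ut = UT "3" "3" "3"

instantiation ut :: ring_1
begin
definition "0 = UT 0 0 0"
definition "1 = UT 1 0 1"
fun plus_ut :: "ut \<Rightarrow> ut \<Rightarrow> ut" where
  "plus_ut (UT a b c) (UT d e f) = UT (a+d) (b+e) (c+f)"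
fun minus_ut :: "ut \<Rightarrow> ut \<Rightarrow> ut" where
  "minus_ut (UT a b c) (UT d e f) = UT (a-d) (b-e) (c-f)"
fun uminus_ut :: "ut \<Rightarrow> ut" where
  "uminus_ut (UT a b c) = UT (-a) (-b) (-c)"
fun times_ut :: "ut \<Rightarrow> ut \<Rightarrow> ut" where
  "times_ut (UT a b c) (UT d e f) = UT (a*d) (a*e + b*f) (c*f)"
instance
proof
  fix x y z :: ut
  show "x * y * z = x * (y * z)" by (cases x; cases y; cases z) (simp add: algebra_simps)
  show "x + y + z = x + (y + z)" by (cases x; cases y; cases z) (simp add: algebra_simps)
  show "x + y = y + x" by (cases x; cases y) (simp add: algebra_simps)
  show "0 + x = x" by (cases x) (simp add: zero_ut_def)
  show "- x + x = 0" by (cases x) (simp add: zero_ut_def)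
  show "x - y = x + - y" by (cases x; cases y) simp
  show "(x + y) * z = x * z + y * z" by (cases x; cases y; cases z) (simp add: algebra_simps)
  show "x * (y + z) = x * y + x * z" by (cases x; cases y; cases z) (simp add: algebra_simps)
  show "1 * x = x" by (cases x) (simp add: one_ut_def)
  show "x * 1 = x" by (cases x) (simp add: one_ut_def)
  show "(0::ut) \<noteq> 1" by (simp add: zero_ut_def one_ut_def)
qed
end



abbreviation PR :: "(ut \<times> ut) set set" where "PR \<equiv> projline"

end

theory Submission
  imports Defs
begin


lemma F3_cases: "(x::3) = 0 \<or> x = 1 \<or> x = 2"
proof (induct x)
  case (of_int z)
  then have "z = 0 \<or> z = 1 \<or> z = 2" by auto
  then show ?case by auto
qed
lemma F3_inv: "(x::3) \<noteq> 0 \<Longrightarrow> x * x = 1"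
  using F3_cases[of x] by auto

lemma sq1_cancel: "(x::'a::comm_ring_1) * x = 1 \<Longrightarrow> x * (x * z) = z"
  by (metis mult.assoc mult_1)

fun p1 :: "ut \<Rightarrow> 3" where "p1 (UT x y z) = x"
fun p2 :: "ut \<Rightarrow> 3" where "p2 (UT x y z) = y"
fun p3 :: "ut \<Rightarrow> 3" where "p3 (UT x y z) = z"
lemma ut_eq: "x = y \<longleftrightarrow> p1 x = p1 y \<and> p2 x = p2 y \<and> p3 x = p3 y"
  by (cases x; cases y) auto
lemma p_simps[simp]:
  "p1 (x*y) = p1 x * p1 y" "p2 (x*y) = p1 x * p2 y + p2 x * p3 y" "p3 (x*y) = p3 x * p3 y"
  "p1 (x+y) = p1 x + p1 y" "p2 (x+y) = p2 x + p2 y" "p3 (x+y) = p3 x + p3 y"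
  "p1 (x-y) = p1 x - p1 y" "p2 (x-y) = p2 x - p2 y" "p3 (x-y) = p3 x - p3 y"
  "p1 (-x) = - p1 x" "p2 (-x) = - p2 x" "p3 (-x) = - p3 x"
  "p1 0 = 0" "p2 0 = 0" "p3 0 = 0" "p1 1 = 1" "p2 1 = 0" "p3 1 = 1"
  by (cases x; cases y; simp add: zero_ut_def one_ut_def)+

lemma unit_iff: "ring_unit u \<longleftrightarrow> p1 u \<noteq> 0 \<and> p3 u \<noteq> 0"
proof
  assume "ring_unit u"
  then obtain v where "u * v = 1" unfolding ring_unit_def by blast
  then have "p1 u * p1 v = 1" "p3 u * p3 v = 1" by (metis p_simps(1,16), metis p_simps(3,18))
  then show "p1 u \<noteq> 0 \<and> p3 u \<noteq> 0" by auto
next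
  assume h: "p1 u \<noteq> 0 \<and> p3 u \<noteq> 0"
  define v where "v = UT (p1 u) (- (p1 u * p2 u * p3 u)) (p3 u)"
  have i1: "p1 u * p1 u = 1" "p3 u * p3 u = 1" using h F3_inv by auto
  have "u * v = 1"
    unfolding ut_eq using i1 by (simp add: v_def algebra_simps sq1_cancel)
  moreover have "v * u = 1"
    unfolding ut_eq using i1 by (simp add: v_def algebra_simps sq1_cancel)
  ultimately show "ring_unit u" unfolding ring_unit_def by blast
qed

lemma adm_unimod: "admissible (a::'a::ring_1) b \<Longrightarrow> \<exists>x y. a*x + b*y = 1"
  unfolding admissible_def invertible2_def by blast

lemma adm_G2:
  fixes a b t :: "'a::ring_1"
  assumes "ring_unit (a + b*t)" shows "admissible a b"
proof -
  obtain v where v: "(a + b*t) * v = 1" "v * (a + b*t) = 1" using assms unfolding ring_unit_def by blast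
  have "invertible2 a b (-t) 1"
    unfolding invertible2_def
  proof (intro exI conjI)
    show "a * v + b * (t*v) = 1" using v(1) by (simp add: algebra_simps)
    show "a * (-(v*b)) + b * (1 - t*v*b) = 0"
    proof -
      have "a * (-(v*b)) + b * (1 - t*v*b) = b - ((a + b*t) * v) * b" by (simp add: algebra_simps)
      then show ?thesis using v(1) by simp
    qed
    show "-t * v + 1 * (t*v) = 0" by simp
    show "-t * (-(v*b)) + 1 * (1 - t*v*b) = 1" by (simp add: algebra_simps)
    show "v * a + (-(v*b)) * (-t) = 1"
    proof -
      have "v * a + (-(v*b)) * (-t) = v * (a + b*t)" by (simp add: algebra_simps)
      then show ?thesis using v(2) by simp
    qed
    show "v * b + (-(v*b)) * 1 = 0" by simp
    show "t*v * a + (1 - t*v*b) * (-t) = 0"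
    proof -
      have "t*v * a + (1 - t*v*b) * (-t) = t * (v * (a + b*t)) - t" by (simp add: algebra_simps)
      then show ?thesis using v(2) by simp
    qed
    show "t*v * b + (1 - t*v*b) * 1 = 1" by (simp add: algebra_simps)
  qed
  then show ?thesis unfolding admissible_def by blast
qed

lemma adm_G3:
  fixes a b :: "'a::ring_1"
  assumes "ring_unit b" shows "admissible a b"
proof -
  obtain w where w: "b * w = 1" "w * b = 1" using assms unfolding ring_unit_def by blast
  have "invertible2 a b 1 0"
    unfolding invertible2_def
  proof (intro exI conjI)
    show "a * 0 + b * w = 1" using w by simp
    show "a * 1 + b * (-(w*a)) = 0"
    proof -
      have "a * 1 + b * (-(w*a)) = a - (b*w)*a" by (simp add: algebra_simps)
      then show ?thesis using w by simp
    qed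
    show "1 * 0 + 0 * w = (0::'a)" by simp
    show "1 * 1 + 0 * (-(w*a)) = (1::'a)" by simp
    show "0 * a + 1 * 1 = (1::'a)" by simp
    show "0 * b + 1 * 0 = (0::'a)" by simp
    show "w * a + (-(w*a)) * 1 = 0" by simp
    show "w * b + (-(w*a)) * 0 = 1" using w by simp
  qed
  then show ?thesis unfolding admissible_def by blast
qed

lemma lsub_unit:
  fixes a b u :: "'a::ring_1"
  assumes "ring_unit u" shows "lsub (u*a) (u*b) = lsub a b"
proof -
  obtain v where v: "u * v = 1" "v * u = 1" using assms unfolding ring_unit_def by blast
  show ?thesis unfolding lsub_def
  proof (intro set_eqI iffI)
    fix x assume "x \<in> {(r * (u*a), r * (u*b)) |r. True}"
    then obtain r where "x = (r * (u*a), r * (u*b))" by blast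
    then have "x = ((r*u) * a, (r*u) * b)" by (simp add: mult.assoc)
    then show "x \<in> {(r * a, r * b) |r. True}" by blast
  next
    fix x assume "x \<in> {(r * a, r * b) |r. True}"
    then obtain r where "x = (r * a, r * b)" by blast
    then have "x = ((r*v) * (u*a), (r*v) * (u*b))"
      by (simp add: mult.assoc flip: mult.assoc[of v u] add: v)
    then show "x \<in> {(r * (u*a), r * (u*b)) |r. True}" by blast
  qed
qed

lemma lsub_eq_unit:
  fixes a b c d :: "'a::ring_1"
  assumes A: "admissible a b" and C: "admissible c d" and E: "lsub a b = lsub c d"
  shows "\<exists>u. ring_unit u \<and> c = u*a \<and> d = u*b"
proof -
  have "(c,d) \<in> lsub c d" unfolding lsub_def by (rule CollectI, rule exI[of _ 1], simp)
  then have "(c,d) \<in> lsub a b" using E by simp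
  then obtain r where r: "c = r*a" "d = r*b" unfolding lsub_def by blast
  have "(a,b) \<in> lsub a b" unfolding lsub_def by (rule CollectI, rule exI[of _ 1], simp)
  then have "(a,b) \<in> lsub c d" using E by simp
  then obtain s where s: "a = s*c" "b = s*d" unfolding lsub_def by blast
  obtain x y where xy: "a*x + b*y = 1" using adm_unimod[OF A] by blast
  obtain x' y' where xy': "c*x' + d*y' = 1" using adm_unimod[OF C] by blast
  have "s*r = 1"
  proof -
    have "s*r = s*r*(a*x + b*y)" using xy by simp
    also have "\<dots> = (s*(r*a))*x + (s*(r*b))*y" by (simp add: algebra_simps)
    also have "\<dots> = a*x + b*y" using r s by simp
    finally show ?thesis using xy by simp
  qed
  moreover have "r*s = 1"
  proof -
    have "r*s = r*s*(c*x' + d*y')" using xy' by simp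
    also have "\<dots> = (r*(s*c))*x' + (r*(s*d))*y'" by (simp add: algebra_simps)
    also have "\<dots> = c*x' + d*y'" using r s by simp
    finally show ?thesis using xy' by simp
  qed
  ultimately have "ring_unit r" unfolding ring_unit_def by blast
  then show ?thesis using r by blast
qed

lemma inv2_scale:
  fixes a b c d u v :: "'a::ring_1"
  assumes I: "invertible2 a b c d" and U: "ring_unit u" and V: "ring_unit v"
  shows "invertible2 (u*a) (u*b) (v*c) (v*d)"
proof -
  obtain e f g h where H: "a*e + b*g = 1" "a*f + b*h = 0" "c*e + d*g = 0" "c*f + d*h = 1"
     "e*a + f*c = 1" "e*b + f*d = 0" "g*a + h*c = 0" "g*b + h*d = 1"
    using I unfolding invertible2_def by blast
  obtain ui where ui: "u*ui = 1" "ui*u = 1" using U unfolding ring_unit_def by blast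
  obtain vi where vi: "v*vi = 1" "vi*v = 1" using V unfolding ring_unit_def by blast
  show ?thesis unfolding invertible2_def
  proof (intro exI conjI)
    have "u*a*(e*ui) + u*b*(g*ui) = u*(a*e + b*g)*ui" by (simp add: algebra_simps)
    then show "u*a*(e*ui) + u*b*(g*ui) = 1" using H ui by simp
    have "u*a*(f*vi) + u*b*(h*vi) = u*(a*f + b*h)*vi" by (simp add: algebra_simps)
    then show "u*a*(f*vi) + u*b*(h*vi) = 0" using H by simp
    have "v*c*(e*ui) + v*d*(g*ui) = v*(c*e + d*g)*ui" by (simp add: algebra_simps)
    then show "v*c*(e*ui) + v*d*(g*ui) = 0" using H by simp
    have "v*c*(f*vi) + v*d*(h*vi) = v*(c*f + d*h)*vi" by (simp add: algebra_simps)
    then show "v*c*(f*vi) + v*d*(h*vi) = 1" using H vi by simp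
    have "e*ui*(u*a) + f*vi*(v*c) = e*(ui*u)*a + f*(vi*v)*c" by (simp add: algebra_simps)
    then show "e*ui*(u*a) + f*vi*(v*c) = 1" using H ui vi by simp
    have "e*ui*(u*b) + f*vi*(v*d) = e*(ui*u)*b + f*(vi*v)*d" by (simp add: algebra_simps)
    then show "e*ui*(u*b) + f*vi*(v*d) = 0" using H ui vi by simp
    have "g*ui*(u*a) + h*vi*(v*c) = g*(ui*u)*a + h*(vi*v)*c" by (simp add: algebra_simps)
    then show "g*ui*(u*a) + h*vi*(v*c) = 0" using H ui vi by simp
    have "g*ui*(u*b) + h*vi*(v*d) = g*(ui*u)*b + h*(vi*v)*d" by (simp add: algebra_simps)
    then show "g*ui*(u*b) + h*vi*(v*d) = 1" using H ui vi by simp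
  qed
qed

lemma inv2_swap: "invertible2 a b c d \<Longrightarrow> invertible2 c d a b"
  unfolding invertible2_def by (metis add.commute)

lemma inv2_adm: "invertible2 a b c d \<Longrightarrow> admissible a b"
  unfolding admissible_def by blast

lemma unit_inverse_unit: "ring_unit (u::'a::ring_1) \<Longrightarrow> \<exists>ui. ring_unit ui \<and> ui * u = 1"
  unfolding ring_unit_def by blast

lemma distant_iff:
  fixes a b c d :: "'a::ring_1"
  assumes A: "admissible a b" and C: "admissible c d"
  shows "distant (lsub a b) (lsub c d) \<longleftrightarrow> invertible2 a b c d"
proof
  assume "distant (lsub a b) (lsub c d)"
  then obtain a' b' c' d' where E: "lsub a b = lsub a' b'" "lsub c d = lsub c' d'"
    and I: "invertible2 a' b' c' d'" unfolding distant_def by blast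
  have A': "admissible a' b'" using inv2_adm[OF I] .
  have C': "admissible c' d'" using inv2_adm[OF inv2_swap[OF I]] .
  obtain u where u: "ring_unit u" "a' = u*a" "b' = u*b" using lsub_eq_unit[OF A A' E(1)] by blast
  obtain v where v: "ring_unit v" "c' = v*c" "d' = v*d" using lsub_eq_unit[OF C C' E(2)] by blast
  obtain ui where ui: "ring_unit ui" "ui*u = 1" using unit_inverse_unit[OF u(1)] by blast
  obtain vi where vi: "ring_unit vi" "vi*v = 1" using unit_inverse_unit[OF v(1)] by blast
  have "invertible2 (ui*(u*a)) (ui*(u*b)) (vi*(v*c)) (vi*(v*d))"
    using inv2_scale[OF I ui(1) vi(1)] u v by simp
  then show "invertible2 a b c d" by (simp add: ui(2) vi(2) flip: mult.assoc)
next
  assume "invertible2 a b c d" then show "distant (lsub a b) (lsub c d)"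
    unfolding distant_def by blast
qed



definition Uc :: "ut \<Rightarrow> ut \<Rightarrow> bool" where
  "Uc a b \<longleftrightarrow> (p1 a \<noteq> 0 \<or> p1 b \<noteq> 0) \<and> (p3 a \<noteq> 0 \<or> p3 b \<noteq> 0)"

lemma adm_iff: "admissible a b \<longleftrightarrow> Uc a b"
proof
  assume "admissible a b"
  then obtain x y where "a*x + b*y = 1" using adm_unimod by blast
  then have "p1 a * p1 x + p1 b * p1 y = 1" "p3 a * p3 x + p3 b * p3 y = 1"
    by (metis p_simps(1,4,16), metis p_simps(3,6,18))
  then show "Uc a b" unfolding Uc_def by auto
next
  assume U: "Uc a b"
  show "admissible a b"
  proof (cases "ring_unit a")
    case True
    then have "ring_unit (a + b*0)" by simp
    then show ?thesis by (rule adm_G2)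
  next
    case na: False
    show ?thesis
    proof (cases "ring_unit b")
      case True then show ?thesis by (rule adm_G3)
    next
      case False
      have "ring_unit (a + b*1)" using U na False unfolding Uc_def unit_iff by auto
      then show ?thesis by (rule adm_G2)
    qed
  qed
qed

section \<open>2x2 matrices as tuples\<close>

type_synonym 'a mat2 = "'a \<times> 'a \<times> 'a \<times> 'a"

fun mm :: "'a::ring_1 mat2 \<Rightarrow> 'a mat2 \<Rightarrow> 'a mat2" where
  "mm (a,b,c,d) (e,f,g,h) = (a*e+b*g, a*f+b*h, c*e+d*g, c*f+d*h)"
fun madd :: "'a::ring_1 mat2 \<Rightarrow> 'a mat2 \<Rightarrow> 'a mat2" where
  "madd (a,b,c,d) (e,f,g,h) = (a+e, b+f, c+g, d+h)"
fun mneg :: "'a::ring_1 mat2 \<Rightarrow> 'a mat2" where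
  "mneg (a,b,c,d) = (-a,-b,-c,-d)"
definition I2 :: "'a::ring_1 mat2" where "I2 = (1,0,0,1)"
definition Z2 :: "'a::ring_1 mat2" where "Z2 = (0,0,0,0)"

lemma mm_assoc: "mm (mm X Y) Z = mm X (mm Y Z)"
  by (cases X; cases Y; cases Z) (simp add: algebra_simps)
lemma mm_I2[simp]: "mm X I2 = X" "mm I2 X = X"
  by (cases X; simp add: I2_def)+
lemma mm_neg: "mm X (mneg Y) = mneg (mm X Y)" "mm (mneg X) Y = mneg (mm X Y)"
  by (cases X; cases Y; simp add: algebra_simps)+
lemma madd_neg: "madd (mneg X) X = Z2" "madd X (mneg X) = Z2"
  by (cases X; simp add: Z2_def)+

lemma inv2_mm: "invertible2 a b c d \<longleftrightarrow> (\<exists>N. mm (a,b,c,d) N = I2 \<and> mm N (a,b,c,d) = I2)"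
  unfolding invertible2_def I2_def by auto

fun det2 :: "'a::comm_ring_1 mat2 \<Rightarrow> 'a" where "det2 (a,b,c,d) = a*d - b*c"
fun adjs :: "'a::comm_ring_1 \<Rightarrow> 'a mat2 \<Rightarrow> 'a mat2" where
  "adjs k (a,b,c,d) = (k*d, -(k*b), -(k*c), k*a)"

lemma det2_mm: "det2 (mm X Y) = det2 X * det2 Y"
  by (cases X; cases Y) (simp add: algebra_simps)
lemma det2_I2[simp]: "det2 I2 = 1" by (simp add: I2_def)
lemma adjs_inv: "k * det2 X = 1 \<Longrightarrow> mm X (adjs k X) = I2 \<and> mm (adjs k X) X = I2"
proof (cases X)
  case (fields a b c d)
  assume h: "k * det2 X = 1"
  then have h': "k*(a*d - b*c) = 1" using fields by simp
  have e1: "a*(k*d) - b*(k*c) = 1" "d*(k*a) - c*(k*b) = 1" "k*d*a - k*b*c = 1" "k*a*d - k*c*b = 1"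
    using h' by (simp_all add: algebra_simps)
  show ?thesis using fields e1 by (simp add: I2_def algebra_simps)
qed

section \<open>Components of UT matrices\<close>

fun C1 :: "ut mat2 \<Rightarrow> 3 mat2" where "C1 (a,b,c,d) = (p1 a, p1 b, p1 c, p1 d)"
fun C2 :: "ut mat2 \<Rightarrow> 3 mat2" where "C2 (a,b,c,d) = (p2 a, p2 b, p2 c, p2 d)"
fun C3 :: "ut mat2 \<Rightarrow> 3 mat2" where "C3 (a,b,c,d) = (p3 a, p3 b, p3 c, p3 d)"
fun build :: "3 mat2 \<Rightarrow> 3 mat2 \<Rightarrow> 3 mat2 \<Rightarrow> ut mat2" where
  "build (a1,b1,c1,d1) (a2,b2,c2,d2) (a3,b3,c3,d3) = (UT a1 a2 a3, UT b1 b2 b3, UT c1 c2 c3, UT d1 d2 d3)"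

lemma C_mm: "C1 (mm X Y) = mm (C1 X) (C1 Y)" "C3 (mm X Y) = mm (C3 X) (C3 Y)"
  "C2 (mm X Y) = madd (mm (C1 X) (C2 Y)) (mm (C2 X) (C3 Y))"
  by (cases X; cases Y; simp add: algebra_simps)+
lemma C_build: "C1 (build A B C) = A" "C2 (build A B C) = B" "C3 (build A B C) = C"
  by (cases A; cases B; cases C; simp)+
lemma mat_eq: "X = Y \<longleftrightarrow> C1 X = C1 Y \<and> C2 X = C2 Y \<and> C3 X = C3 Y"
  by (cases X; cases Y) (auto simp: ut_eq)
lemma C_I2: "C1 I2 = I2" "C2 I2 = Z2" "C3 I2 = I2"
  by (simp_all add: I2_def Z2_def)

lemma inv2_ut_iff:
  "invertible2 a b c d \<longleftrightarrow> det2 (C1 (a,b,c,d)) \<noteq> 0 \<and> det2 (C3 (a,b,c,d)) \<noteq> 0"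
proof
  assume "invertible2 a b c d"
  then obtain N where N: "mm (a,b,c,d) N = I2" using inv2_mm by blast
  have "det2 (C1 (a,b,c,d)) * det2 (C1 N) = 1"
    using arg_cong[OF N, of "\<lambda>X. det2 (C1 X)"] by (simp add: C_mm det2_mm C_I2)
  moreover have "det2 (C3 (a,b,c,d)) * det2 (C3 N) = 1"
    using arg_cong[OF N, of "\<lambda>X. det2 (C3 X)"] by (simp add: C_mm det2_mm C_I2)
  ultimately show "det2 (C1 (a,b,c,d)) \<noteq> 0 \<and> det2 (C3 (a,b,c,d)) \<noteq> 0" by auto
next
  assume h: "det2 (C1 (a,b,c,d)) \<noteq> 0 \<and> det2 (C3 (a,b,c,d)) \<noteq> 0"
  define M where "M = (a,b,c,d)"
  define X1 where "X1 = C1 M"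
  define X2 where "X2 = C2 M"
  define X3 where "X3 = C3 M"
  define N1 where "N1 = adjs (det2 X1) X1"
  define N3 where "N3 = adjs (det2 X3) X3"
  define N2 where "N2 = mneg (mm (mm N1 X2) N3)"
  define N where "N = build N1 N2 N3"
  have n1: "mm X1 N1 = I2" "mm N1 X1 = I2" using adjs_inv[of "det2 X1" X1] h F3_inv
    unfolding N1_def X1_def M_def by auto
  have n3: "mm X3 N3 = I2" "mm N3 X3 = I2" using adjs_inv[of "det2 X3" X3] h F3_inv
    unfolding N3_def X3_def M_def by auto
  have "mm M N = I2"
  proof -
    have "mm X1 N2 = mneg (mm X2 N3)"
      unfolding N2_def mm_neg by (simp add: mm_assoc flip: mm_assoc[of X1 N1] add: n1)
    then have "madd (mm X1 N2) (mm X2 N3) = Z2" by (simp add: madd_neg)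
    then show ?thesis unfolding mat_eq
      by (simp add: C_mm C_build C_I2 N_def n1 n3 flip: X1_def X2_def X3_def)
  qed
  moreover have "mm N M = I2"
  proof -
    have "mm N2 X3 = mneg (mm N1 X2)"
      unfolding N2_def mm_neg by (simp add: mm_assoc n3)
    then have "madd (mm N1 X2) (mm N2 X3) = Z2" by (simp add: madd_neg)
    then show ?thesis unfolding mat_eq
      by (simp add: C_mm C_build C_I2 N_def n1 n3 flip: X1_def X2_def X3_def)
  qed
  ultimately show "invertible2 a b c d" unfolding inv2_mm M_def by blast
qed



definition nrm :: "3 \<Rightarrow> 3 \<Rightarrow> 3 \<times> 3" where
  "nrm x y = (if x \<noteq> 0 then (1, y*x) else (0,1))"
definition nz :: "3 \<Rightarrow> 3 \<Rightarrow> 3" where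
  "nz x y = (if x \<noteq> 0 then x else y)"
definition pinv :: "ut \<Rightarrow> ut \<Rightarrow> (3\<times>3) \<times> (3\<times>3) \<times> 3" where
  "pinv a b = (nrm (p1 a) (p1 b), nrm (p3 a) (p3 b),
     (p2 a * p3 b - p2 b * p3 a) * nz (p1 a) (p1 b) * nz (p3 a) (p3 b))"
fun rep :: "(3\<times>3) \<times> (3\<times>3) \<times> 3 \<Rightarrow> ut \<times> ut" where
  "rep ((x1,y1),(x3,y3),z) =
     (if x3 \<noteq> 0 then (UT x1 0 x3, UT y1 (-z) y3) else (UT x1 z x3, UT y1 0 y3))"
definition Pn :: "(3\<times>3) set" where "Pn = {(1,0),(1,1),(1,2),(0,1)}"
definition I0 :: "((3\<times>3) \<times> (3\<times>3) \<times> 3) set" where "I0 = Pn \<times> Pn \<times> UNIV"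

lemma UNIV3: "(UNIV::3 set) = {0,1,2}" using F3_cases by auto

lemma nrm_Pn: "nrm x y \<in> Pn"
  using F3_cases[of x] F3_cases[of y] by (auto simp: nrm_def Pn_def)

lemma pinv_I0: "pinv a b \<in> I0"
  unfolding pinv_def I0_def by (simp add: nrm_Pn)

lemma rep_ok: "t \<in> I0 \<Longrightarrow> Uc (fst (rep t)) (snd (rep t)) \<and> pinv (fst (rep t)) (snd (rep t)) = t"
  unfolding I0_def Pn_def UNIV3 by (auto simp: Uc_def pinv_def nrm_def nz_def)

lemma nrm_det: "(x,y) \<noteq> (0,0) \<Longrightarrow> (x',y') \<noteq> (0,0) \<Longrightarrow> (x*y' - y*x' \<noteq> 0 \<longleftrightarrow> nrm x y \<noteq> nrm x' y')"
  using F3_cases[of x] F3_cases[of y] F3_cases[of x'] F3_cases[of y'] by (auto simp: nrm_def)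

lemma nrm_01: "(x,y) \<noteq> (0,0) \<Longrightarrow> (nrm x y \<noteq> (0,1) \<longleftrightarrow> x \<noteq> 0) \<and> (nrm x y \<noteq> (1,0) \<longleftrightarrow> y \<noteq> 0)"
  using F3_cases[of x] F3_cases[of y] by (auto simp: nrm_def)

lemma nrm_scale: "u \<noteq> 0 \<Longrightarrow> nrm (u*x) (u*y) = nrm x y"
  using F3_cases[of x] F3_cases[of y] F3_cases[of u] by (auto simp: nrm_def)
lemma nz_scale: "u \<noteq> 0 \<Longrightarrow> nz (u*x) (u*y) = u * nz x y"
  using F3_cases[of x] F3_cases[of y] F3_cases[of u] by (auto simp: nz_def)

lemma pinv_scale: assumes "ring_unit u" shows "pinv (u*a) (u*b) = pinv a b"
proof -
  have u: "p1 u \<noteq> 0" "p3 u \<noteq> 0" using assms unit_iff by auto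
  have uu: "p1 u * p1 u = 1" "p3 u * p3 u = 1" using u F3_inv by auto
  have "(p2 (u*a) * p3 (u*b) - p2 (u*b) * p3 (u*a)) = p1 u * p3 u * (p2 a * p3 b - p2 b * p3 a)"
    by (simp add: algebra_simps)
  then have "(p2 (u*a) * p3 (u*b) - p2 (u*b) * p3 (u*a)) * nz (p1 (u*a)) (p1 (u*b)) * nz (p3 (u*a)) (p3 (u*b))
     = (p1 u * p1 u) * (p3 u * p3 u) * ((p2 a * p3 b - p2 b * p3 a) * nz (p1 a) (p1 b) * nz (p3 a) (p3 b))"
  proof -
    have n1: "nz (p1 (u*a)) (p1 (u*b)) = p1 u * nz (p1 a) (p1 b)" using u by (simp add: nz_scale)
    have n3: "nz (p3 (u*a)) (p3 (u*b)) = p3 u * nz (p3 a) (p3 b)" using u by (simp add: nz_scale)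
    show ?thesis unfolding n1 n3 \<open>(p2 (u*a) * p3 (u*b) - p2 (u*b) * p3 (u*a)) = _\<close>
      by (simp add: algebra_simps)
  qed
  then show ?thesis unfolding pinv_def using u uu by (simp add: nrm_scale)
qed

lemma canon: assumes U: "Uc a b"
  shows "\<exists>u. ring_unit u \<and> u*a = fst (rep (pinv a b)) \<and> u*b = snd (rep (pinv a b))"
proof -
  obtain a1 a2 a3 where a: "a = UT a1 a2 a3" by (cases a)
  obtain b1 b2 b3 where b: "b = UT b1 b2 b3" by (cases b)
  have U1: "a1 \<noteq> 0 \<or> b1 \<noteq> 0" and U3: "a3 \<noteq> 0 \<or> b3 \<noteq> 0" using U a b by (auto simp: Uc_def)
  define u1 where "u1 = nz a1 b1"
  define u3 where "u3 = nz a3 b3"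
  define u2 where "u2 = (if a3 \<noteq> 0 then -(u1*a2*a3) else -(u1*b2*b3))"
  have u1: "u1 \<noteq> 0" "u1*u1 = 1" using U1 F3_inv by (auto simp: u1_def nz_def)
  have u3: "u3 \<noteq> 0" "u3*u3 = 1" using U3 F3_inv by (auto simp: u3_def nz_def)
  have unit: "ring_unit (UT u1 u2 u3)" using u1 u3 by (simp add: unit_iff)
  have sq: "\<And>x::3. x \<noteq> 0 \<Longrightarrow> x*x = 1" using F3_inv by auto
  show ?thesis
  proof (intro exI conjI)
    show "ring_unit (UT u1 u2 u3)" by (rule unit)
    show "UT u1 u2 u3 * a = fst (rep (pinv a b))" "UT u1 u2 u3 * b = snd (rep (pinv a b))"
    proof -
      have "(a1 \<noteq> 0 \<or> a1 = 0) \<and> (a3 \<noteq> 0 \<or> a3 = 0)" by blast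
      then have "UT u1 u2 u3 * a = fst (rep (pinv a b)) \<and> UT u1 u2 u3 * b = snd (rep (pinv a b))"
      proof (elim conjE disjE)
        assume h: "a1 \<noteq> 0" "a3 \<noteq> 0"
        then show ?thesis using sq[OF h(1)] sq[OF h(2)]
          by (simp add: a b pinv_def nrm_def nz_def u1_def u2_def u3_def algebra_simps sq1_cancel)
      next
        assume h: "a1 \<noteq> 0" "a3 = 0"
        then have h3: "b3 \<noteq> 0" using U3 by simp
        show ?thesis using sq[OF h(1)] sq[OF h3] h
          by (simp add: a b pinv_def nrm_def nz_def u1_def u2_def u3_def algebra_simps sq1_cancel)
      next
        assume h: "a1 = 0" "a3 \<noteq> 0"
        then have h1: "b1 \<noteq> 0" using U1 by simp
        show ?thesis using sq[OF h1] sq[OF h(2)] h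
          by (simp add: a b pinv_def nrm_def nz_def u1_def u2_def u3_def algebra_simps sq1_cancel)
      next
        assume h: "a1 = 0" "a3 = 0"
        then have h1: "b1 \<noteq> 0" "b3 \<noteq> 0" using U1 U3 by simp_all
        show ?thesis using sq[OF h1(1)] sq[OF h1(2)] h
          by (simp add: a b pinv_def nrm_def nz_def u1_def u2_def u3_def algebra_simps sq1_cancel)
      qed
      then show "UT u1 u2 u3 * a = fst (rep (pinv a b))" "UT u1 u2 u3 * b = snd (rep (pinv a b))" by auto
    qed
  qed
qed



definition Phi :: "(3\<times>3) \<times> (3\<times>3) \<times> 3 \<Rightarrow> (ut \<times> ut) set" where
  "Phi t = lsub (fst (rep t)) (snd (rep t))"

definition Dr :: "(3\<times>3) \<times> (3\<times>3) \<times> 3 \<Rightarrow> (3\<times>3) \<times> (3\<times>3) \<times> 3 \<Rightarrow> bool" where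
  "Dr s t \<longleftrightarrow> fst s \<noteq> fst t \<and> fst (snd s) \<noteq> fst (snd t)"

definition Gu :: "(3\<times>3) \<times> (3\<times>3) \<times> 3 \<Rightarrow> bool" where
  "Gu s \<longleftrightarrow> (fst s \<noteq> (0,1) \<and> fst (snd s) \<noteq> (0,1)) \<or> (fst s \<noteq> (1,0) \<and> fst (snd s) \<noteq> (1,0))"

lemma lsub_iff_pinv:
  assumes "Uc a b" "Uc c d"
  shows "lsub a b = lsub c d \<longleftrightarrow> pinv a b = pinv c d"
proof
  assume "lsub a b = lsub c d"
  then obtain u where "ring_unit u" "c = u*a" "d = u*b"
    using lsub_eq_unit assms adm_iff by metis
  then show "pinv a b = pinv c d" using pinv_scale by simp
next
  assume E: "pinv a b = pinv c d"
  obtain u where u: "ring_unit u" "u*a = fst (rep (pinv a b))" "u*b = snd (rep (pinv a b))"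
    using canon[OF assms(1)] by blast
  obtain v where v: "ring_unit v" "v*c = fst (rep (pinv c d))" "v*d = snd (rep (pinv c d))"
    using canon[OF assms(2)] by blast
  have "lsub a b = lsub (u*a) (u*b)" using lsub_unit[OF u(1)] by simp
  also have "\<dots> = lsub (v*c) (v*d)" using u v E by simp
  also have "\<dots> = lsub c d" using lsub_unit[OF v(1)] by simp
  finally show "lsub a b = lsub c d" .
qed

lemma PR_eq: "PR = Phi ` I0"
proof
  show "PR \<subseteq> Phi ` I0"
  proof
    fix p assume "p \<in> PR"
    then obtain a b where p: "p = lsub a b" "Uc a b" unfolding projline_def adm_iff by blast
    define t where "t = pinv a b"
    have t: "t \<in> I0" unfolding t_def by (rule pinv_I0)
    have "Phi t = p" unfolding Phi_def p(1)
      using lsub_iff_pinv[OF _ p(2)] rep_ok[OF t] t_def by auto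
    then show "p \<in> Phi ` I0" using t by blast
  qed
next
  show "Phi ` I0 \<subseteq> PR"
    using rep_ok unfolding projline_def Phi_def adm_iff by blast
qed

lemma Phi_inj: "inj_on Phi I0"
proof (rule inj_onI)
  fix s t assume s: "s \<in> I0" and t: "t \<in> I0" and E: "Phi s = Phi t"
  then show "s = t" using lsub_iff_pinv rep_ok[OF s] rep_ok[OF t] unfolding Phi_def by metis
qed

lemma Phi_distant: assumes s: "s \<in> I0" and t: "t \<in> I0"
  shows "distant (Phi s) (Phi t) \<longleftrightarrow> Dr s t"
proof -
  obtain a b where ab: "rep s = (a,b)" by fastforce
  obtain c d where cd: "rep t = (c,d)" by fastforce
  have U: "Uc a b" "Uc c d" and P: "pinv a b = s" "pinv c d = t"
    using rep_ok[OF s] rep_ok[OF t] ab cd by auto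
  have "distant (Phi s) (Phi t) \<longleftrightarrow> invertible2 a b c d"
  proof -
    have "admissible a b" "admissible c d" using U adm_iff by auto
    then show ?thesis unfolding Phi_def ab cd by (simp add: distant_iff)
  qed
  also have "\<dots> \<longleftrightarrow> (p1 a * p1 d - p1 b * p1 c \<noteq> 0 \<and> p3 a * p3 d - p3 b * p3 c \<noteq> 0)"
    by (simp add: inv2_ut_iff)
  also have "\<dots> \<longleftrightarrow> Dr s t"
    using U nrm_det[of "p1 a" "p1 b" "p1 c" "p1 d"] nrm_det[of "p3 a" "p3 b" "p3 c" "p3 d"]
    unfolding Dr_def P[symmetric] pinv_def Uc_def by auto
  finally show ?thesis .
qed

lemma Uc_unit: "Uc a b \<Longrightarrow> (ring_unit a \<or> ring_unit b \<longleftrightarrow> Gu (pinv a b))"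
  using nrm_01[of "p1 a" "p1 b"] nrm_01[of "p3 a" "p3 b"]
  unfolding Gu_def pinv_def unit_iff Uc_def by auto

lemma Phi_unit: assumes s: "s \<in> I0"
  shows "(\<exists>a b. admissible a b \<and> lsub a b = Phi s \<and> (ring_unit a \<or> ring_unit b)) \<longleftrightarrow> Gu s"
proof
  assume "\<exists>a b. admissible a b \<and> lsub a b = Phi s \<and> (ring_unit a \<or> ring_unit b)"
  then obtain a b where h: "Uc a b" "lsub a b = Phi s" "ring_unit a \<or> ring_unit b"
    using adm_iff by blast
  have "pinv a b = s" using h(2) lsub_iff_pinv[OF h(1)] rep_ok[OF s] unfolding Phi_def by metis
  then show "Gu s" using Uc_unit[OF h(1)] h(3) by simp
next
  assume "Gu s"
  then show "\<exists>a b. admissible a b \<and> lsub a b = Phi s \<and> (ring_unit a \<or> ring_unit b)"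
    using rep_ok[OF s] Uc_unit[of "fst (rep s)" "snd (rep s)"] adm_iff unfolding Phi_def by metis
qed



definition PL :: "(3\<times>3) list" where "PL = [(1,0),(1,1),(1,2),(0,1)]"
definition L0 :: "((3\<times>3) \<times> (3\<times>3) \<times> 3) list" where
  "L0 = concat (map (\<lambda>l1. concat (map (\<lambda>l3. map (\<lambda>z. (l1,l3,z)) [0,1,2]) PL)) PL)"

lemma I0_L0: "I0 = set L0"
  unfolding I0_def L0_def Pn_def PL_def UNIV3 by auto

lemma L0_distinct: "distinct L0"
  unfolding L0_def PL_def by simp

lemma card_filter: "distinct xs \<Longrightarrow> card {x \<in> set xs. P x} = length (filter P xs)"
  by (metis distinct_card distinct_filter set_filter)

lemma cnt_i: "card I0 = 48"
  unfolding I0_L0 using L0_distinct distinct_card by (fastforce simp: L0_def PL_def)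

lemma cnt_ii: "card {s \<in> I0. Gu s} = 42"
  unfolding I0_L0 card_filter[OF L0_distinct] by (simp add: L0_def PL_def Gu_def)

lemma cnt_iii: "\<forall>s\<in>I0. card {t \<in> I0. \<not> Dr s t \<and> t \<noteq> s} = 20"
  unfolding I0_L0 card_filter[OF L0_distinct] by (simp add: L0_def PL_def Dr_def)

lemma cnt_iv: "\<forall>s\<in>I0. \<forall>t\<in>I0. Dr s t \<longrightarrow> card {r \<in> I0. \<not> Dr s r \<and> \<not> Dr t r} = 6"
proof (intro ballI impI)
  fix s t assume s: "s \<in> I0" and t: "t \<in> I0" and D: "Dr s t"
  have E: "{r \<in> I0. \<not> Dr s r \<and> \<not> Dr t r} =
     ({fst s} \<times> {fst (snd t)} \<times> UNIV) \<union> ({fst t} \<times> {fst (snd s)} \<times> UNIV)"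
    using s t D unfolding I0_def Dr_def by auto
  have "card (({fst s} \<times> {fst (snd t)} \<times> (UNIV::3 set)) \<union> ({fst t} \<times> {fst (snd s)} \<times> UNIV)) = 3 + 3"
    by (subst card_Un_disjoint) (use D in \<open>auto simp: Dr_def card_cartesian_product\<close>)
  then show "card {r \<in> I0. \<not> Dr s r \<and> \<not> Dr t r} = 6" using E by simp
qed



lemma image_filter: "{q \<in> f ` A. P q} = f ` {t \<in> A. P (f t)}" by auto

theorem mainTheorem2:
  shows "card PR = 48
    \<and> card {p \<in> PR. \<exists>a b. admissible a b \<and> lsub a b = p \<and> (ring_unit a \<or> ring_unit b)} = 42
    \<and> (\<forall>p \<in> PR. card {q \<in> PR. neighbour p q \<and> q \<noteq> p} = 20)
    \<and> (\<forall>p \<in> PR. \<forall>q \<in> PR. distant p q \<longrightarrow> card {r \<in> PR. neighbour p r \<and> neighbour q r} = 6)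
    \<and> (\<forall>p \<in> PR. \<forall>q \<in> PR. \<forall>r \<in> PR. distant p q \<and> distant p r \<and> distant q r \<longrightarrow>
           \<not> (\<exists>s \<in> PR. neighbour p s \<and> neighbour q s \<and> neighbour r s))
    \<and> (\<exists>S \<subseteq> PR. card S = 4 \<and> pairwise distant S)
    \<and> (\<forall>S \<subseteq> PR. pairwise distant S \<longrightarrow> card S \<le> 4)"
proof -
  have cardPhi: "\<And>A. A \<subseteq> I0 \<Longrightarrow> card (Phi ` A) = card A"
    by (rule card_image, rule inj_on_subset[OF Phi_inj])
  have nbD: "\<And>s t. s \<in> I0 \<Longrightarrow> t \<in> I0 \<Longrightarrow> neighbour (Phi s) (Phi t) \<longleftrightarrow> \<not> Dr s t"
    unfolding neighbour_def using Phi_distant by simp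
  have i: "card PR = 48" unfolding PR_eq using cardPhi[of I0] cnt_i by simp
  have ii: "card {p \<in> PR. \<exists>a b. admissible a b \<and> lsub a b = p \<and> (ring_unit a \<or> ring_unit b)} = 42"
  proof -
    have "{p \<in> PR. \<exists>a b. admissible a b \<and> lsub a b = p \<and> (ring_unit a \<or> ring_unit b)}
        = Phi ` {s \<in> I0. Gu s}"
      unfolding PR_eq image_filter
      by (intro arg_cong[where f="image Phi"] Collect_cong) (use Phi_unit in blast)
    then show ?thesis using cardPhi[of "{s \<in> I0. Gu s}"] cnt_ii by simp
  qed
  have iii: "\<forall>p \<in> PR. card {q \<in> PR. neighbour p q \<and> q \<noteq> p} = 20"
  proof
    fix p assume "p \<in> PR"
    then obtain s where s: "s \<in> I0" "p = Phi s" unfolding PR_eq by blast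
    have "{q \<in> PR. neighbour p q \<and> q \<noteq> p} = Phi ` {t \<in> I0. \<not> Dr s t \<and> t \<noteq> s}"
      unfolding PR_eq image_filter s(2)
    proof (intro arg_cong[where f="image Phi"] Collect_cong)
      fix t show "(t \<in> I0 \<and> neighbour (Phi s) (Phi t) \<and> Phi t \<noteq> Phi s) = (t \<in> I0 \<and> \<not> Dr s t \<and> t \<noteq> s)"
        using nbD[OF s(1)] inj_onD[OF Phi_inj _ _ s(1)] by blast
    qed
    then show "card {q \<in> PR. neighbour p q \<and> q \<noteq> p} = 20"
      using cardPhi[of "{t \<in> I0. \<not> Dr s t \<and> t \<noteq> s}"] cnt_iii s(1) by simp
  qed
  have iv: "\<forall>p \<in> PR. \<forall>q \<in> PR. distant p q \<longrightarrow> card {r \<in> PR. neighbour p r \<and> neighbour q r} = 6"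
  proof (intro ballI impI)
    fix p q assume "p \<in> PR" "q \<in> PR" and d: "distant p q"
    then obtain s t where s: "s \<in> I0" "p = Phi s" and t: "t \<in> I0" "q = Phi t" unfolding PR_eq by blast
    have D: "Dr s t" using d Phi_distant[OF s(1) t(1)] s t by simp
    have "{r \<in> PR. neighbour p r \<and> neighbour q r} = Phi ` {r \<in> I0. \<not> Dr s r \<and> \<not> Dr t r}"
      unfolding PR_eq image_filter s(2) t(2)
    proof (intro arg_cong[where f="image Phi"] Collect_cong)
      fix r show "(r \<in> I0 \<and> neighbour (Phi s) (Phi r) \<and> neighbour (Phi t) (Phi r)) = (r \<in> I0 \<and> \<not> Dr s r \<and> \<not> Dr t r)"
        using nbD[OF s(1)] nbD[OF t(1)] by blast
    qed
    then show "card {r \<in> PR. neighbour p r \<and> neighbour q r} = 6"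
      using cardPhi[of "{r \<in> I0. \<not> Dr s r \<and> \<not> Dr t r}"] cnt_iv s(1) t(1) D by simp
  qed
  have v: "\<forall>p \<in> PR. \<forall>q \<in> PR. \<forall>r \<in> PR. distant p q \<and> distant p r \<and> distant q r \<longrightarrow>
           \<not> (\<exists>s \<in> PR. neighbour p s \<and> neighbour q s \<and> neighbour r s)"
  proof (intro ballI impI notI)
    fix p q r assume "p \<in> PR" "q \<in> PR" "r \<in> PR" and d: "distant p q \<and> distant p r \<and> distant q r"
      and "\<exists>s \<in> PR. neighbour p s \<and> neighbour q s \<and> neighbour r s"
    then obtain a b c e where a: "a \<in> I0" "p = Phi a" and b: "b \<in> I0" "q = Phi b"
      and c: "c \<in> I0" "r = Phi c" and e: "e \<in> I0"
      and n: "neighbour p (Phi e)" "neighbour q (Phi e)" "neighbour r (Phi e)"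
      unfolding PR_eq by blast
    have "Dr a b" "Dr a c" "Dr b c" using d Phi_distant a b c by auto
    moreover have "\<not> Dr a e" "\<not> Dr b e" "\<not> Dr c e" using n nbD a b c e by auto
    ultimately show False unfolding Dr_def by metis
  qed
  have vi1: "\<exists>S \<subseteq> PR. card S = 4 \<and> pairwise distant S"
  proof -
    define S0 where "S0 = {((1::3,0::3),(1::3,0::3),0::3), ((1,1),(1,1),0), ((1,2),(1,2),0), ((0,1),(0,1),0)}"
    have S0: "S0 \<subseteq> I0" unfolding S0_def I0_def Pn_def by auto
    have c: "card S0 = 4" unfolding S0_def by simp
    have pw: "\<And>s t. s \<in> S0 \<Longrightarrow> t \<in> S0 \<Longrightarrow> s \<noteq> t \<Longrightarrow> Dr s t"
      unfolding S0_def Dr_def by auto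
    have "pairwise distant (Phi ` S0)"
    proof (rule pairwiseI)
      fix x y assume "x \<in> Phi ` S0" "y \<in> Phi ` S0" "x \<noteq> y"
      then obtain s t where "s \<in> S0" "t \<in> S0" "x = Phi s" "y = Phi t" "s \<noteq> t" by blast
      then show "distant x y" using pw Phi_distant S0 by blast
    qed
    moreover have "Phi ` S0 \<subseteq> PR" unfolding PR_eq using S0 by blast
    moreover have "card (Phi ` S0) = 4" using cardPhi[OF S0] c by simp
    ultimately show ?thesis by blast
  qed
  have vi2: "\<forall>S \<subseteq> PR. pairwise distant S \<longrightarrow> card S \<le> 4"
  proof (intro allI impI)
    fix S assume S: "S \<subseteq> PR" and pw: "pairwise distant S"
    define T where "T = {t \<in> I0. Phi t \<in> S}"
    have ST: "S = Phi ` T" using S unfolding T_def PR_eq by blast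
    have T: "T \<subseteq> I0" unfolding T_def by blast
    have "inj_on fst T"
    proof (rule inj_onI, rule ccontr)
      fix s t assume st: "s \<in> T" "t \<in> T" "fst s = fst t" "s \<noteq> t"
      then have "Phi s \<noteq> Phi t" using inj_onD[OF Phi_inj] T by blast
      moreover have "Phi s \<in> S" "Phi t \<in> S" using st unfolding T_def by auto
      ultimately have "distant (Phi s) (Phi t)" using pw unfolding pairwise_def by blast
      then have "Dr s t" using Phi_distant st T by blast
      then show False using st unfolding Dr_def by simp
    qed
    then have "card T = card (fst ` T)" by (simp add: card_image)
    also have "\<dots> \<le> card Pn"
      by (rule card_mono) (use T in \<open>auto simp: Pn_def I0_def\<close>)
    also have "\<dots> = 4" unfolding Pn_def by simp
    finally show "card S \<le> 4" using ST cardPhi[OF T] by simp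
  qed
  show ?thesis using i ii iii iv v vi1 vi2 by blast
qed

end
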